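(* Let $\mathcal{H}$ be a complex Hilbert space and $B,C\in\mathcal{B}(\mathcal{H})$. Then $$w\left(\begin{bmatrix}0 & B\\ C & 0\end{bmatrix}\right)\ge \frac12\max\{\|B\|,\|C\|\}+\frac14\Big|\,\|B+C^*\|-\|B-C^*\|\,\Big|.$$
   Context: $\mathcal{B}(\mathcal{H})$ is the algebra of bounded linear operators on $\mathcal{H}$ with operator norm $\|\cdot\|$; $A^*$ is the adjoint; $w(A)=\sup_{\|x\|=1}|\langle Ax,x\rangle|$ is the numerical radius. The operator matrix $\begin{bmatrix}A&B\\C&D\end{bmatrix}$ acts on $\mathcal{H}\oplus\mathcal{H}$ by $(x_1,x_2)\mapsto(Ax_1+Bx_2,\,Cx_1+Dx_2)$; $0$ denotes the zero operator. *)

theory Defs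
  imports "HOL-Analysis.Analysis"
begin

class complex_vector = real_vector +
  fixes scaleC :: "complex \<Rightarrow> 'a \<Rightarrow> 'a" (infixr \<open>*\<^sub>C\<close> 75)
  assumes scaleC_add_right: "scaleC a (x + y) = scaleC a x + scaleC a y"
    and scaleC_add_left: "scaleC (a + b) x = scaleC a x + scaleC b x"
    and scaleC_scaleC: "scaleC a (scaleC b x) = scaleC (a * b) x"
    and scaleC_one: "scaleC 1 x = x"
    and scaleR_scaleC: "scaleR r x = scaleC (complex_of_real r) x"

class complex_inner = complex_vector + real_normed_vector +
  fixes cinner :: "'a \<Rightarrow> 'a \<Rightarrow> complex"
  assumes cinner_commute: "cinner x y = cnj (cinner y x)"
    and cinner_add_left: "cinner (x + y) z = cinner x z + cinner y z"
    and cinner_scaleC_left: "cinner (scaleC r x) y = cnj r * cinner x y"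
    and cinner_ge_zero: "0 \<le> Re (cinner x x)"
    and cinner_eq_zero_iff: "cinner x x = 0 \<longleftrightarrow> x = 0"
    and norm_eq_sqrt_cinner: "norm x = sqrt (Re (cinner x x))"

class chilbert_space = complex_inner + complete_space

lemma Re_cinner_self: "Re (cinner x x) = (norm x)\<^sup>2" for x :: "'a::complex_inner"
  using norm_eq_sqrt_cinner[of x] cinner_ge_zero[of x] by simp

lemma Im_cinner_self: "Im (cinner x x) = 0" for x :: "'a::complex_inner"
  using cinner_commute[of x x] by (metis cnj.sel(2) neg_equal_zero)

lemma cinner_self_eq: "cinner x x = complex_of_real ((norm x)\<^sup>2)" for x :: "'a::complex_inner"
  by (simp add: complex_eq_iff Re_cinner_self Im_cinner_self)

text \<open>The complex numbers form a complex Hilbert space (consistency of the class).\<close>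
instantiation complex :: chilbert_space
begin
definition scaleC_complex_def: "scaleC a (x::complex) = a * x"
definition cinner_complex_def: "cinner (x::complex) y = cnj x * y"
instance
proof
  fix x y z :: complex and a b :: complex and r :: real
  show "a *\<^sub>C (x + y) = a *\<^sub>C x + a *\<^sub>C y" by (simp add: scaleC_complex_def algebra_simps)
  show "(a + b) *\<^sub>C x = a *\<^sub>C x + b *\<^sub>C x" by (simp add: scaleC_complex_def algebra_simps)
  show "a *\<^sub>C b *\<^sub>C x = (a * b) *\<^sub>C x" by (simp add: scaleC_complex_def)
  show "1 *\<^sub>C x = x" by (simp add: scaleC_complex_def)
  show "r *\<^sub>R x = complex_of_real r *\<^sub>C x" by (simp add: scaleC_complex_def scaleR_conv_of_real)
  show "cinner x y = cnj (cinner y x)" by (simp add: cinner_complex_def)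
  show "cinner (x + y) z = cinner x z + cinner y z" by (simp add: cinner_complex_def algebra_simps)
  show "cinner (a *\<^sub>C x) y = cnj a * cinner x y" by (simp add: cinner_complex_def scaleC_complex_def)
  show "0 \<le> Re (cinner x x)" by (simp add: cinner_complex_def)
  show "(cinner x x = 0) = (x = 0)" by (simp add: cinner_complex_def)
  show "norm x = sqrt (Re (cinner x x))"
    by (simp add: cinner_complex_def cmod_def power2_eq_square)
qed
end

text \<open>Orthogonal direct sum \<open>H \<oplus> K\<close>, modelled as the product type.\<close>
instantiation prod :: (complex_inner, complex_inner) complex_inner
begin
definition scaleC_prod_def: "scaleC a (x :: 'a \<times> 'b) = (scaleC a (fst x), scaleC a (snd x))"
definition cinner_prod_def:
  "cinner (x :: 'a \<times> 'b) y = cinner (fst x) (fst y) + cinner (snd x) (snd y)"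
instance
proof
  fix x y z :: "'a \<times> 'b" and a b :: complex and r :: real
  show "a *\<^sub>C (x + y) = a *\<^sub>C x + a *\<^sub>C y" by (simp add: scaleC_prod_def scaleC_add_right)
  show "(a + b) *\<^sub>C x = a *\<^sub>C x + b *\<^sub>C x" by (simp add: scaleC_prod_def scaleC_add_left)
  show "a *\<^sub>C b *\<^sub>C x = (a * b) *\<^sub>C x" by (simp add: scaleC_prod_def scaleC_scaleC)
  show "1 *\<^sub>C x = x" by (simp add: scaleC_prod_def scaleC_one)
  show "r *\<^sub>R x = complex_of_real r *\<^sub>C x"
    by (simp add: scaleC_prod_def scaleR_scaleC scaleR_prod_def)
  show "cinner x y = cnj (cinner y x)"
    by (simp add: cinner_prod_def cinner_commute[of "fst x"] cinner_commute[of "snd x"])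
  show "cinner (x + y) z = cinner x z + cinner y z" by (simp add: cinner_prod_def cinner_add_left)
  show "cinner (a *\<^sub>C x) y = cnj a * cinner x y"
    by (simp add: cinner_prod_def scaleC_prod_def cinner_scaleC_left algebra_simps)
  show "0 \<le> Re (cinner x x)" by (simp add: cinner_prod_def Re_cinner_self)
  show "(cinner x x = 0) = (x = 0)"
  proof -
    have "cinner x x = complex_of_real ((norm (fst x))\<^sup>2 + (norm (snd x))\<^sup>2)"
      by (simp add: cinner_prod_def cinner_self_eq)
    then show ?thesis
      by (simp add: prod_eq_iff add_nonneg_eq_0_iff del: of_real_add)
  qed
  show "norm x = sqrt (Re (cinner x x))"
    by (simp add: cinner_prod_def Re_cinner_self norm_prod_def)
qed
end

text \<open>\<open>T \<in> B(H, K)\<close>: complex-linear and bounded.  The operator norm is the library's \<open>onorm\<close>.\<close>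
definition bounded_clinear :: "('a::complex_inner \<Rightarrow> 'b::complex_inner) \<Rightarrow> bool" where
  "bounded_clinear T \<longleftrightarrow>
     (\<forall>x y. T (x + y) = T x + T y) \<and> (\<forall>c x. T (c *\<^sub>C x) = c *\<^sub>C T x) \<and>
     (\<exists>K. \<forall>x. norm (T x) \<le> norm x * K)"

definition cadjoint :: "('a::complex_inner \<Rightarrow> 'b::complex_inner) \<Rightarrow> 'b \<Rightarrow> 'a" where
  "cadjoint T = (\<lambda>y. THE z. \<forall>x. cinner (T x) y = cinner x z)"

text \<open>Numerical radius \<open>w(A) = sup_{\<parallel>x\<parallel>=1} |\<langle>A x, x\<rangle>|\<close>; the extra \<open>0\<close> only matters
  for the zero space (empty supremum := 0) and is harmless otherwise.\<close>
definition numrad :: "('a::complex_inner \<Rightarrow> 'a) \<Rightarrow> real" where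
  "numrad A = Sup (insert 0 ((\<lambda>x. cmod (cinner (A x) x)) ` {x. norm x = 1}))"

definition opmat :: "('a \<Rightarrow> 'a) \<Rightarrow> ('a \<Rightarrow> 'a) \<Rightarrow> ('a \<Rightarrow> 'a) \<Rightarrow> ('a \<Rightarrow> 'a) \<Rightarrow> 'a \<times> 'a \<Rightarrow> 'a \<times> 'a::complex_inner"
  where "opmat A B C D = (\<lambda>(x1, x2). (A x1 + B x2, C x1 + D x2))"

end

theory Submission
  imports Defs
begin

context fixes dummy :: "'a::complex_inner" begin end

lemma cinner_zero_left[simp]: "cinner 0 y = 0" for y :: "'a::complex_inner"
  using cinner_add_left[of "0::'a" 0 y] by simp
lemma cinner_minus_left[simp]: "cinner (-x) y = - cinner x y" for x :: "'a::complex_inner"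
  using cinner_add_left[of x "-x" y] by (simp add: eq_neg_iff_add_eq_0 add.commute)
lemma cinner_diff_left: "cinner (x - z) y = cinner x y - cinner z y" for x :: "'a::complex_inner"
  using cinner_add_left[of x "-z" y] by simp
lemma cinner_add_right: "cinner y (x + z) = cinner y x + cinner y z" for x :: "'a::complex_inner"
  by (metis cinner_add_left cinner_commute complex_cnj_add)
lemma cinner_zero_right[simp]: "cinner y 0 = 0" for y :: "'a::complex_inner"
  by (metis cinner_commute cinner_zero_left complex_cnj_zero)
lemma cinner_diff_right: "cinner y (x - z) = cinner y x - cinner y z" for x :: "'a::complex_inner"
  by (metis cinner_diff_left cinner_commute complex_cnj_diff)
lemma cinner_scaleC_right: "cinner y (c *\<^sub>C x) = c * cinner y x" for x :: "'a::complex_inner"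
  by (metis cinner_scaleC_left cinner_commute complex_cnj_mult complex_cnj_cnj)
lemma cinner_scaleR_left: "cinner (r *\<^sub>R x) y = complex_of_real r * cinner x y" for x :: "'a::complex_inner"
  by (simp add: scaleR_scaleC cinner_scaleC_left)
lemma cinner_scaleR_right: "cinner y (r *\<^sub>R x) = complex_of_real r * cinner y x" for x :: "'a::complex_inner"
  by (simp add: scaleR_scaleC cinner_scaleC_right)

lemmas cinner_simps = cinner_add_left cinner_add_right cinner_diff_left cinner_diff_right
  cinner_scaleC_left cinner_scaleC_right cinner_scaleR_left cinner_scaleR_right

lemma cinner_Cauchy_Schwarz: "cmod (cinner x y) \<le> norm x * norm y" for x :: "'a::complex_inner"
proof (cases "y = 0")
  case True then show ?thesis by simp
next
  case False
  define n where "n = (norm y)^2"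
  have n: "n > 0" using False by (simp add: n_def)
  define c where "c = cinner y x"
  define a where "a = c / complex_of_real n"
  have cxy: "cinner x y = cnj c" by (simp add: c_def cinner_commute[of x])
  have "0 \<le> Re (cinner (x - a *\<^sub>C y) (x - a *\<^sub>C y))" by (rule cinner_ge_zero)
  also have "cinner (x - a *\<^sub>C y) (x - a *\<^sub>C y) = cinner x x - a * cinner x y - cnj a * cinner y x + cnj a * a * cinner y y"
    by (simp add: cinner_simps algebra_simps)
  also have "\<dots> = complex_of_real ((norm x)^2 - (cmod c)^2 / n)"
  proof -
    have yy: "cinner y y = complex_of_real n" by (simp add: cinner_self_eq n_def)
    show ?thesis
    using n unfolding a_def cxy yy by (simp add: cinner_self_eq c_def[symmetric] complex_eq_iff field_simps power2_eq_square cmod_def)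
  qed
  finally have "(cmod c)^2 \<le> (norm x)^2 * (norm y)^2" using n by (simp add: n_def field_simps)
  then have "(cmod c)^2 \<le> (norm x * norm y)^2" by (simp add: power_mult_distrib)
  then have "cmod c \<le> norm x * norm y" by (rule power2_le_imp_le) simp
  then show ?thesis by (simp add: cxy)
qed

lemma parallelogram: "(norm (a - b))^2 + (norm (a + b))^2 = 2 * (norm a)^2 + 2 * (norm b)^2"
  for a :: "'a::complex_inner"
proof -
  have "cinner (a - b) (a - b) + cinner (a + b) (a + b) = 2 * cinner a a + 2 * cinner b b"
    by (simp add: cinner_simps algebra_simps)
  then have "Re (cinner (a - b) (a - b) + cinner (a + b) (a + b)) = Re (2 * cinner a a + 2 * cinner b b)"
    by simp
  then show ?thesis by (simp add: Re_cinner_self)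
qed

lemma riesz:
  fixes f :: "'a::chilbert_space \<Rightarrow> complex"
  assumes add: "\<And>x y. f (x + y) = f x + f y"
    and sc: "\<And>c x. f (c *\<^sub>C x) = c * f x"
    and bnd: "\<And>x. cmod (f x) \<le> norm x * K"
  shows "\<exists>z. \<forall>x. f x = cinner z x"
proof (cases "\<forall>x. f x = 0")
  case True
  then show ?thesis by (intro exI[of _ 0]) simp
next
  case False
  then obtain x0 where x0: "f x0 \<noteq> 0" by blast
  have f0: "f 0 = 0" using add[of 0 0] by simp
  have scR: "f (r *\<^sub>R x) = complex_of_real r * f x" for r x
    by (simp add: scaleR_scaleC sc)
  have blf: "bounded_linear f"
    by (rule bounded_linear_intro[OF add _ bnd]) (simp add: scR scaleR_conv_of_real)
  define S where "S = {x. f x = 1}"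
  have x1S: "(1 / f x0) *\<^sub>C x0 \<in> S" using x0 by (simp add: S_def sc)
  define d where "d = Inf (norm ` S)"
  have bb: "bdd_below (norm ` S)" by (rule bdd_belowI[of _ 0]) auto
  have ne: "norm ` S \<noteq> {}" using x1S by blast
  have dle: "d \<le> norm x" if "x \<in> S" for x
    unfolding d_def using bb that by (simp add: cInf_lower)
  have d0: "0 \<le> d" using dle[OF x1S] unfolding d_def
    by (metis bb cInf_greatest ne imageE norm_ge_zero)
  have "\<forall>n. \<exists>x\<in>S. norm x < d + inverse (real (Suc n))"
  proof
    fix n
    have "Inf (norm ` S) < d + inverse (real (Suc n))" unfolding d_def
      by (simp add: inverse_Suc)
    then show "\<exists>x\<in>S. norm x < d + inverse (real (Suc n))"
      using cInf_less_iff[OF ne bb] by auto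
  qed
  then obtain X where XS: "\<And>n. X n \<in> S" and Xn: "\<And>n. norm (X n) < d + inverse (real (Suc n))"
    by metis
  have mid: "(1/2) *\<^sub>R (a + b) \<in> S" if "a \<in> S" "b \<in> S" for a b
    using that by (simp add: S_def scR add)
  have key: "(norm (X m - X n))^2 \<le> 4 * e * (2 * d + 1)"
    if "inverse (real (Suc m)) \<le> e" "inverse (real (Suc n)) \<le> e" "e \<le> 1" for m n e
  proof -
    have p: "(norm (X m - X n))^2 = 2 * (norm (X m))^2 + 2 * (norm (X n))^2 - (norm (X m + X n))^2"
      using parallelogram[of "X m" "X n"] by simp
    have "d \<le> norm ((1/2) *\<^sub>R (X m + X n))" by (rule dle[OF mid[OF XS XS]])
    then have "2 * d \<le> norm (X m + X n)" by simp
    then have s1: "(2*d)^2 \<le> (norm (X m + X n))^2" using d0 by (intro power_mono) auto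
    have "norm (X m) \<le> d + e" using Xn[of m] that by linarith
    then have s2: "(norm (X m))^2 \<le> (d+e)^2" by (intro power_mono) auto
    have "norm (X n) \<le> d + e" using Xn[of n] that by linarith
    then have s3: "(norm (X n))^2 \<le> (d+e)^2" by (intro power_mono) auto
    have "(norm (X m - X n))^2 \<le> 4 * (d+e)^2 - 4 * d^2" using p s1 s2 s3 by (simp add: power_mult_distrib)
    also have "\<dots> = 4 * e * (2 * d + e)" by (simp add: power2_eq_square algebra_simps)
    also have "\<dots> \<le> 4 * e * (2 * d + 1)"
      using that d0 by (intro mult_left_mono) (auto intro: order_trans[OF _ that(1)] simp: inverse_Suc less_imp_le)
    finally show ?thesis .
  qed
  have "Cauchy X"
  proof (rule CauchyI)
    fix \<epsilon> :: real assume e: "0 < \<epsilon>"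
    define \<eta> where "\<eta> = min 1 (\<epsilon>^2 / (4 * (2 * d + 1)))"
    have eta: "0 < \<eta>" using e d0 by (simp add: \<eta>_def)
    obtain N where N: "inverse (real (Suc N)) < \<eta>" using reals_Archimedean[OF eta] by auto
    have "norm (X m - X n) < \<epsilon>" if "m \<ge> N" "n \<ge> N" for m n
    proof -
      have mono: "inverse (real (Suc k)) \<le> inverse (real (Suc N))" if "k \<ge> N" for k
        using that by (simp add: le_imp_inverse_le)
      have e1: "inverse (real (Suc N)) \<le> 1" by (simp add: field_simps)
      have "(norm (X m - X n))^2 \<le> 4 * inverse (real (Suc N)) * (2 * d + 1)"
        by (rule key[OF mono[OF that(1)] mono[OF that(2)] e1])
      also have "\<dots> < 4 * \<eta> * (2 * d + 1)" using N d0 by simp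
      also have "\<dots> \<le> \<epsilon>^2"
      proof -
        have "\<eta> \<le> \<epsilon>^2 / (4 * (2 * d + 1))" by (simp add: \<eta>_def)
        then have "\<eta> * (4 * (2 * d + 1)) \<le> \<epsilon>^2" using d0 by (simp add: pos_le_divide_eq)
        moreover have "4 * \<eta> * (2 * d + 1) = \<eta> * (4 * (2 * d + 1))" by (simp only: ac_simps)
        ultimately show ?thesis by linarith
      qed
      finally have "(norm (X m - X n))^2 < \<epsilon>^2" .
      then show ?thesis using e by (simp add: power_less_imp_less_base)
    qed
    then show "\<exists>M. \<forall>m\<ge>M. \<forall>n\<ge>M. norm (X m - X n) < \<epsilon>" by blast
  qed
  then obtain v where lim: "X \<longlonglongrightarrow> v" using Cauchy_convergent convergent_def by blast
  have "(\<lambda>n. f (X n)) \<longlonglongrightarrow> f v" by (rule bounded_linear.tendsto[OF blf lim])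
  moreover have "(\<lambda>n. f (X n)) = (\<lambda>n. 1)" using XS by (simp add: S_def)
  ultimately have fv: "f v = 1" using LIMSEQ_unique tendsto_const by metis
  have "(\<lambda>n. d + inverse (real (Suc n))) \<longlonglongrightarrow> d + 0"
    by (intro tendsto_intros LIMSEQ_inverse_real_of_nat)
  moreover have "\<exists>N. \<forall>n\<ge>N. norm (X n) \<le> d + inverse (real (Suc n))"
    using Xn less_imp_le by blast
  ultimately have "norm v \<le> d + 0" by (rule LIMSEQ_le[OF tendsto_norm[OF lim]])
  then have nv: "norm v \<le> d" by simp
  have orth: "cinner v n = 0" if fn: "f n = 0" for n
  proof (rule ccontr)
    assume cne: "cinner v n \<noteq> 0"
    define c where "c = cinner v n"
    define s where "s = 1 / ((norm n)^2 + 1)"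
    have np: "0 < (norm n)^2 + 1" by (rule add_nonneg_pos) simp_all
    have s0: "0 < s" using np by (simp add: s_def)
    have sn: "s * (norm n)^2 < 1" using np by (simp add: s_def field_simps)
    define t where "t = - complex_of_real s * cnj c"
    have "v + t *\<^sub>C n \<in> S" using fv fn by (simp add: S_def add sc)
    then have "norm v \<le> norm (v + t *\<^sub>C n)" using dle nv by force
    then have "(norm v)^2 \<le> (norm (v + t *\<^sub>C n))^2" by (simp add: power_mono)
    also have "(norm (v + t *\<^sub>C n))^2 = Re (cinner (v + t *\<^sub>C n) (v + t *\<^sub>C n))"
      by (simp add: Re_cinner_self)
    also have "cinner (v + t *\<^sub>C n) (v + t *\<^sub>C n) = cinner v v + t * cinner v n + cnj t * cinner n v + cnj t * t * cinner n n"
      by (simp add: cinner_simps algebra_simps)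
    also have "Re \<dots> = (norm v)^2 - 2 * s * (cmod c)^2 + s^2 * (cmod c)^2 * (norm n)^2"
    proof -
      have nv': "cinner n v = cnj c" by (simp add: c_def cinner_commute[of n])
      show ?thesis unfolding t_def nv' c_def[symmetric]
        by (simp add: cinner_self_eq cmod_def power2_eq_square algebra_simps)
    qed
    finally have "2 * s * (cmod c)^2 \<le> s * (s * (norm n)^2) * (cmod c)^2" by (simp add: power2_eq_square algebra_simps)
    also have "\<dots> < s * 1 * (cmod c)^2" using s0 sn cne c_def by (intro mult_strict_right_mono mult_strict_left_mono) auto
    finally show False using s0 cne c_def by (simp add: power2_eq_square)
  qed
  have vne: "v \<noteq> 0" using fv f0 by auto
  have nvpos: "0 < (norm v)^2" using vne by simp
  show ?thesis
  proof (intro exI allI)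
    fix x
    have "f (x - f x *\<^sub>C v) = 0"
      using add[of "x - f x *\<^sub>C v" "f x *\<^sub>C v"] by (simp add: sc fv)
    then have "cinner v (x - f x *\<^sub>C v) = 0" by (rule orth)
    then have "cinner v x = f x * complex_of_real ((norm v)^2)"
      by (simp add: cinner_simps cinner_self_eq)
    then show "f x = cinner ((1 / (norm v)^2) *\<^sub>R v) x"
      using nvpos by (simp add: cinner_scaleR_left field_simps)
  qed
qed

lemma cinner_ext: "(\<And>x. cinner x a = cinner x b) \<Longrightarrow> a = b" for a :: "'a::complex_inner"
proof -
  assume h: "\<And>x. cinner x a = cinner x b"
  have "cinner (a - b) (a - b) = 0" using h[of "a - b"] by (simp add: cinner_diff_right)
  then show "a = b" by (simp add: cinner_eq_zero_iff)
qed

lemma bclin_parts: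
  assumes "bounded_clinear T"
  shows "T (x + y) = T x + T y" "T (c *\<^sub>C x) = c *\<^sub>C T x" "\<exists>K\<ge>0. \<forall>x. norm (T x) \<le> norm x * K"
proof -
  show "T (x + y) = T x + T y" "T (c *\<^sub>C x) = c *\<^sub>C T x" using assms by (auto simp: bounded_clinear_def)
  obtain K where K: "\<forall>x. norm (T x) \<le> norm x * K" using assms by (auto simp: bounded_clinear_def)
  have "norm (T x) \<le> norm x * max K 0" for x
    using K[rule_format, of x] by (smt (verit) mult_left_mono norm_ge_zero)
  then show "\<exists>K\<ge>0. \<forall>x. norm (T x) \<le> norm x * K" by (intro exI[of _ "max K 0"]) auto
qed

lemma bclin_linear:
  assumes "bounded_clinear T"
  shows "bounded_linear T"
proof -
  obtain K where "\<forall>x. norm (T x) \<le> norm x * K" using bclin_parts(3)[OF assms] by blast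
  then show ?thesis
    by (intro bounded_linear_intro[of _ K]) (auto simp: bclin_parts[OF assms] scaleR_scaleC)
qed

lemma adjoint_prop:
  fixes C :: "'a::chilbert_space \<Rightarrow> 'b::chilbert_space"
  assumes "bounded_clinear C"
  shows "cinner (C x) y = cinner x (cadjoint C y)"
proof -
  obtain K where K0: "K \<ge> 0" and K: "\<And>x. norm (C x) \<le> norm x * K"
    using bclin_parts(3)[OF assms] by blast
  have "\<exists>z. \<forall>x. cinner y (C x) = cinner z x"
  proof (rule riesz)
    show "cinner y (C (x + x')) = cinner y (C x) + cinner y (C x')" for x x'
      by (simp add: bclin_parts[OF assms] cinner_add_right)
    show "cinner y (C (c *\<^sub>C x)) = c * cinner y (C x)" for c x
      by (simp add: bclin_parts[OF assms] cinner_scaleC_right)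
    show "cmod (cinner y (C x)) \<le> norm x * (norm y * K)" for x
    proof -
      have "cmod (cinner y (C x)) \<le> norm y * norm (C x)" by (rule cinner_Cauchy_Schwarz)
      also have "\<dots> \<le> norm y * (norm x * K)" by (intro mult_left_mono K) simp
      finally show ?thesis by (simp add: algebra_simps)
    qed
  qed
  then obtain z where z: "\<And>x. cinner y (C x) = cinner z x" by blast
  have ex: "\<forall>x. cinner (C x) y = cinner x z"
  proof
    fix x
    have "cinner (C x) y = cnj (cinner y (C x))" by (rule cinner_commute)
    also have "\<dots> = cnj (cinner z x)" by (simp only: z)
    also have "\<dots> = cinner x z" by (rule cinner_commute[symmetric])
    finally show "cinner (C x) y = cinner x z" .
  qed
  have "\<exists>!z. \<forall>x. cinner (C x) y = cinner x z"
  proof (rule ex1I[of _ z])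
    show "\<forall>x. cinner (C x) y = cinner x z" by (rule ex)
    fix z'
    assume h: "\<forall>x. cinner (C x) y = cinner x z'"
    show "z' = z"
    proof (rule cinner_ext)
      fix x show "cinner x z' = cinner x z" using h[rule_format, of x] ex[rule_format, of x] by simp
    qed
  qed
  then have "\<forall>x. cinner (C x) y = cinner x (THE z. \<forall>x. cinner (C x) y = cinner x z)"
    by (rule theI')
  then show ?thesis unfolding cadjoint_def by blast
qed

lemma adjoint_bclin:
  fixes C :: "'a::chilbert_space \<Rightarrow> 'a"
  assumes "bounded_clinear C"
  shows "bounded_clinear (cadjoint C)"
proof -
  note adj = adjoint_prop[OF assms]
  obtain K where K0: "K \<ge> 0" and K: "\<And>x. norm (C x) \<le> norm x * K"
    using bclin_parts(3)[OF assms] by blast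
  have add: "cadjoint C (x + y) = cadjoint C x + cadjoint C y" for x y
    by (rule cinner_ext) (simp add: adj[symmetric] cinner_add_right)
  have sc: "cadjoint C (c *\<^sub>C x) = c *\<^sub>C cadjoint C x" for c x
    by (rule cinner_ext) (simp add: adj[symmetric] cinner_scaleC_right)
  have bnd: "norm (cadjoint C y) \<le> norm y * K" for y
  proof (cases "cadjoint C y = 0")
    case True then show ?thesis using K0 by simp
  next
    case False
    let ?z = "cadjoint C y"
    have "(norm ?z)^2 = Re (cinner ?z ?z)" by (simp add: Re_cinner_self)
    also have "cinner ?z ?z = cinner (C ?z) y" by (simp add: adj)
    also have "Re \<dots> \<le> cmod (cinner (C ?z) y)" by (rule complex_Re_le_cmod)
    also have "\<dots> \<le> norm (C ?z) * norm y" by (rule cinner_Cauchy_Schwarz)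
    also have "\<dots> \<le> norm ?z * K * norm y" by (intro mult_right_mono K) simp
    finally have "norm ?z * norm ?z \<le> norm ?z * (norm y * K)" by (simp add: power2_eq_square algebra_simps)
    then show ?thesis using False by simp
  qed
  show ?thesis unfolding bounded_clinear_def using add sc bnd by blast
qed

lemma norm_scaleC: "norm (c *\<^sub>C x) = cmod c * norm x" for x :: "'a::complex_inner"
proof -
  have cc: "cnj c * c = complex_of_real ((cmod c)^2)" by (subst complex_norm_square) (simp add: mult.commute)
  have "cinner (c *\<^sub>C x) (c *\<^sub>C x) = (cnj c * c) * cinner x x"
    by (simp add: cinner_scaleC_left cinner_scaleC_right mult.assoc)
  then have "cinner (c *\<^sub>C x) (c *\<^sub>C x) = complex_of_real ((cmod c)^2) * cinner x x"
    by (simp only: cc)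
  then have "complex_of_real ((norm (c *\<^sub>C x))^2) = complex_of_real ((cmod c * norm x)^2)"
    by (simp only: cinner_self_eq power_mult_distrib of_real_mult)
  then have "(norm (c *\<^sub>C x))^2 = (cmod c * norm x)^2"
    by (simp only: of_real_eq_iff)
  then show ?thesis by (simp add: power2_eq_iff_nonneg)
qed

theorem mainTheorem2:
  fixes B C :: "'a::chilbert_space \<Rightarrow> 'a"
  assumes "bounded_clinear B" and "bounded_clinear C"
  shows "numrad (opmat (\<lambda>_. 0) B C (\<lambda>_. 0)) \<ge>
           1/2 * max (onorm B) (onorm C)
           + 1/4 * \<bar>onorm (\<lambda>x. B x + cadjoint C x) - onorm (\<lambda>x. B x - cadjoint C x)\<bar>"
proof -
  define T where "T = opmat (\<lambda>_. 0) B C (\<lambda>_. 0)"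
  define Cs where "Cs = cadjoint C"
  define D where "D = (\<lambda>x. B x + Cs x)"
  define E where "E = (\<lambda>x. B x - Cs x)"
  define W where "W = numrad T"
  have adj: "\<And>x y. cinner (C x) y = cinner x (Cs y)"
    unfolding Cs_def by (rule adjoint_prop[OF assms(2)])
  have Csb: "bounded_clinear Cs" unfolding Cs_def by (rule adjoint_bclin[OF assms(2)])
  have Bl: "bounded_linear B" by (rule bclin_linear[OF assms(1)])
  have Csl: "bounded_linear Cs" by (rule bclin_linear[OF Csb])
  have Dl: "bounded_linear D" unfolding D_def by (rule bounded_linear_add[OF Bl Csl])
  have El: "bounded_linear E" unfolding E_def by (rule bounded_linear_sub[OF Bl Csl])
  obtain KB where KB0: "0 \<le> KB" and KB: "\<And>x. norm (B x) \<le> norm x * KB" using bclin_parts(3)[OF assms(1)] by blast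
  obtain KC where KC0: "0 \<le> KC" and KC: "\<And>x. norm (C x) \<le> norm x * KC" using bclin_parts(3)[OF assms(2)] by blast
  have Bz: "B 0 = 0" using bclin_parts(1)[OF assms(1), of 0 0] by simp
  have Csz: "Cs 0 = 0" using bclin_parts(1)[OF Csb, of 0 0] by simp
  have Tp: "T (x1, x2) = (B x2, C x1)" for x1 x2 by (simp add: T_def opmat_def)
  have cT: "cinner (T (x1, x2)) (x1, x2) = cinner (B x2) x1 + cinner (C x1) x2" for x1 x2
    by (simp add: Tp cinner_prod_def)
  define R where "R = (\<lambda>x. cmod (cinner (T x) x)) ` {x. norm x = 1}"
  have bdd: "bdd_above (insert 0 R)"
  proof -
    have "r \<le> KB + KC" if "r \<in> R" for r
    proof -
      obtain u where u: "norm u = 1" "r = cmod (cinner (T u) u)" using \<open>r \<in> R\<close> R_def by auto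
      obtain x1 x2 where ux: "u = (x1, x2)" by fastforce
      have "r \<le> norm (T u) * norm u" unfolding u(2) by (rule cinner_Cauchy_Schwarz)
      also have "\<dots> = norm (B x2, C x1)" using u ux Tp by simp
      also have "\<dots> \<le> norm (B x2) + norm (C x1)" by (rule norm_Pair_le)
      also have "norm (B x2) \<le> KB"
      proof -
        have "norm x2 \<le> 1" using norm_snd_le[of x2 x1] u ux by simp
        moreover note KB0
        ultimately show ?thesis by (intro order_trans[OF KB[of x2]] mult_left_le_one_le) auto
      qed
      also have "norm (C x1) \<le> KC"
      proof -
        have "norm x1 \<le> 1" using norm_fst_le[of x1 x2] u ux by simp
        moreover note KC0
        ultimately show ?thesis by (intro order_trans[OF KC[of x1]] mult_left_le_one_le) auto
      qed
      finally show ?thesis by simp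
    qed
    then show ?thesis by (intro bdd_aboveI[of _ "max 0 (KB + KC)"]) (auto simp: le_max_iff_disj)
  qed
  have W0: "0 \<le> W" unfolding W_def numrad_def R_def[symmetric]
    using bdd by (intro cSup_upper) auto
  have Wb: "cmod (cinner (T u) u) \<le> W * (norm u)^2" for u
  proof (cases "u = 0")
    case True then show ?thesis by simp
  next
    case False
    define r where "r = 1 / norm u"
    have r0: "r > 0" using False by (simp add: r_def)
    obtain x1 x2 where ux: "u = (x1, x2)" by fastforce
    have lin: "T (r *\<^sub>R u) = r *\<^sub>R T u"
      unfolding ux scaleR_Pair Tp by (simp add: scaleR_scaleC bclin_parts(2)[OF assms(1)] bclin_parts(2)[OF assms(2)])
    have "norm (r *\<^sub>R u) = 1" using False by (simp add: r_def)
    then have "cmod (cinner (T (r *\<^sub>R u)) (r *\<^sub>R u)) \<le> W"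
      unfolding W_def numrad_def R_def[symmetric] using bdd by (intro cSup_upper) (auto simp: R_def)
    also have "cinner (T (r *\<^sub>R u)) (r *\<^sub>R u) = complex_of_real (r^2) * cinner (T u) u"
      by (simp add: lin cinner_scaleR_left cinner_scaleR_right power2_eq_square)
    finally have "r^2 * cmod (cinner (T u) u) \<le> W" by (simp add: norm_mult norm_power)
    then show ?thesis using False by (simp add: r_def field_simps)
  qed
  have Dy: "norm (D y) \<le> 2 * W * norm y" for y
  proof (cases "y = 0 \<or> D y = 0")
    case True
    then show ?thesis using W0 Bz Csz by (auto simp: D_def)
  next
    case False
    define w where "w = D y"
    have wn: "0 < norm w" and yn: "0 < norm y" using False w_def by auto
    define t where "t = norm y / norm w"
    define x1 where "x1 = t *\<^sub>R w"
    have e1: "Re (cinner x1 (Cs y)) = Re (cinner (Cs y) x1)" by (subst cinner_commute) simp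
    have "Re (cinner (T (x1, y)) (x1, y)) = Re (cinner (D y) x1)"
      unfolding cT adj D_def cinner_add_left using e1 by simp
    also have "cinner (D y) x1 = complex_of_real (t * (norm w)^2)"
      by (simp add: x1_def w_def cinner_scaleR_right cinner_self_eq)
    finally have "t * (norm w)^2 = Re (cinner (T (x1, y)) (x1, y))" by simp
    also have "\<dots> \<le> cmod (cinner (T (x1, y)) (x1, y))" by (rule complex_Re_le_cmod)
    also have "\<dots> \<le> W * (norm (x1, y))^2" by (rule Wb)
    also have "(norm (x1, y))^2 = t^2 * (norm w)^2 + (norm y)^2"
      using wn yn by (simp add: norm_Pair x1_def t_def power_mult_distrib power_divide)
    finally have h1: "t * (norm w)^2 \<le> W * (t^2 * (norm w)^2 + (norm y)^2)" .
    have e1: "t * (norm w)^2 = norm y * norm w" and e2: "t^2 * (norm w)^2 = (norm y)^2"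
      using wn by (simp_all add: t_def power2_eq_square)
    have "norm y * norm w \<le> W * ((norm y)^2 + (norm y)^2)" using h1 unfolding e1 e2 .
    then have "norm y * norm w \<le> norm y * (2 * W * norm y)"
      by (simp add: algebra_simps power2_eq_square)
    then show ?thesis using yn w_def by simp
  qed
  have Ey: "norm (E y) \<le> 2 * W * norm y" for y
  proof (cases "y = 0 \<or> E y = 0")
    case True
    then show ?thesis using W0 Bz Csz by (auto simp: E_def)
  next
    case False
    define w where "w = E y"
    have wn: "0 < norm w" and yn: "0 < norm y" using False w_def by auto
    define t where "t = norm y / norm w"
    define x1 where "x1 = t *\<^sub>R (\<i> *\<^sub>C w)"
    have e1: "Im (cinner x1 (Cs y)) = - Im (cinner (Cs y) x1)" by (subst cinner_commute) simp
    have "Im (cinner (T (x1, y)) (x1, y)) = Im (cinner (E y) x1)"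
      unfolding cT adj E_def cinner_diff_left using e1 by simp
    also have "cinner (E y) x1 = \<i> * complex_of_real (t * (norm w)^2)"
      by (simp add: x1_def w_def cinner_scaleR_right cinner_scaleC_right cinner_self_eq)
    finally have "t * (norm w)^2 = Im (cinner (T (x1, y)) (x1, y))" by simp
    also have "\<dots> \<le> cmod (cinner (T (x1, y)) (x1, y))" using abs_Im_le_cmod by (rule order_trans[OF abs_ge_self])
    also have "\<dots> \<le> W * (norm (x1, y))^2" by (rule Wb)
    also have "(norm (x1, y))^2 = t^2 * (norm w)^2 + (norm y)^2"
      using wn yn by (simp add: norm_Pair x1_def t_def power_mult_distrib power_divide norm_scaleC)
    finally have h1: "t * (norm w)^2 \<le> W * (t^2 * (norm w)^2 + (norm y)^2)" .
    have e1: "t * (norm w)^2 = norm y * norm w" and e2: "t^2 * (norm w)^2 = (norm y)^2"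
      using wn by (simp_all add: t_def power2_eq_square)
    have "norm y * norm w \<le> W * ((norm y)^2 + (norm y)^2)" using h1 unfolding e1 e2 .
    then have "norm y * norm w \<le> norm y * (2 * W * norm y)"
      by (simp add: algebra_simps power2_eq_square)
    then show ?thesis using yn w_def by simp
  qed
  define a where "a = onorm D"
  define b where "b = onorm E"
  have a0: "0 \<le> a" unfolding a_def by (rule onorm_pos_le[OF Dl])
  have b0: "0 \<le> b" unfolding b_def by (rule onorm_pos_le[OF El])
  have aW: "a \<le> 2 * W" unfolding a_def using W0 by (intro onorm_bound Dy) simp
  have bW: "b \<le> 2 * W" unfolding b_def using W0 by (intro onorm_bound Ey) simp
  have Bx: "norm (B x) \<le> (a + b) / 2 * norm x" for x
  proof -
    have "D x + E x = 2 *\<^sub>R B x" by (simp add: D_def E_def scaleR_2)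
    then have "2 * norm (B x) = norm (D x + E x)" by simp
    also have "\<dots> \<le> norm (D x) + norm (E x)" by (rule norm_triangle_ineq)
    also have "\<dots> \<le> a * norm x + b * norm x" unfolding a_def b_def
      by (intro add_mono onorm[OF Dl] onorm[OF El])
    finally show ?thesis by (simp add: algebra_simps)
  qed
  have Csx: "norm (Cs x) \<le> (a + b) / 2 * norm x" for x
  proof -
    have "D x - E x = 2 *\<^sub>R Cs x" by (simp add: D_def E_def scaleR_2)
    then have "2 * norm (Cs x) = norm (D x - E x)" by simp
    also have "\<dots> \<le> norm (D x) + norm (E x)" by (rule norm_triangle_ineq4)
    also have "\<dots> \<le> a * norm x + b * norm x" unfolding a_def b_def
      by (intro add_mono onorm[OF Dl] onorm[OF El])
    finally show ?thesis by (simp add: algebra_simps)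
  qed
  have Cx: "norm (C x) \<le> (a + b) / 2 * norm x" for x
  proof (cases "C x = 0")
    case True then show ?thesis using a0 b0 by simp
  next
    case False
    have "(norm (C x))^2 = Re (cinner (C x) (C x))" by (simp add: Re_cinner_self)
    also have "\<dots> = Re (cinner x (Cs (C x)))" by (simp only: adj)
    also have "\<dots> \<le> cmod (cinner x (Cs (C x)))" by (rule complex_Re_le_cmod)
    also have "\<dots> \<le> norm x * norm (Cs (C x))" by (rule cinner_Cauchy_Schwarz)
    also have "\<dots> \<le> norm x * ((a + b) / 2 * norm (C x))" by (intro mult_left_mono Csx) simp
    finally have "norm (C x) * norm (C x) \<le> norm (C x) * ((a + b) / 2 * norm x)"
      by (simp add: power2_eq_square algebra_simps)
    then show ?thesis using False by simp
  qed
  have nB: "onorm B \<le> (a + b) / 2" using a0 b0 by (intro onorm_bound Bx) simp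
  have nC: "onorm C \<le> (a + b) / 2" using a0 b0 by (intro onorm_bound Cx) simp
  have M: "max (onorm B) (onorm C) \<le> (a + b) / 2" using nB nC by simp
  have fin: "1/2 * m + 1/4 * \<bar>a - b\<bar> \<le> W" if M: "m \<le> (a + b) / 2" for m
  proof (cases "a \<le> b")
    case True
    then have "\<bar>a - b\<bar> = b - a" by simp
    then show ?thesis using M bW by (simp add: field_simps)
  next
    case False
    then have "\<bar>a - b\<bar> = a - b" by simp
    then show ?thesis using M aW by (simp add: field_simps)
  qed
  note fin[OF M]
  then show ?thesis unfolding W_def T_def a_def b_def D_def E_def Cs_def .
qed

end
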